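(* Let $\Omega\subset\mathbb{R}^d$ be a bounded open set whose boundary $\partial\Omega$ is split into a part $\Gamma_D$ of positive surface measure and $\Gamma_N=\partial\Omega\setminus\Gamma_D$. Let $\mathbb{A}^\varepsilon\in (L^\infty(\Omega))^{d\times d}$ be symmetric with $\alpha|\boldsymbol{\xi}|^2\le \mathbb{A}^\varepsilon(\boldsymbol{x})\boldsymbol{\xi}\cdot\boldsymbol{\xi}\le\beta|\boldsymbol{\xi}|^2$ for all $\boldsymbol{\xi}\in\mathbb{R}^d$ and a.e. $\boldsymbol{x}\in\Omega$, for some $0<\alpha\le\beta$. Let $f\in L^2(\Omega)$, $g\in L^2(\Gamma_N)$, $V=\{v\in H^1(\Omega):\ v=0 \text{ on }\Gamma_D\}$, $B^\varepsilon(u,v)=\int_\Omega \mathbb{A}^\varepsilon\nabla u\cdot\nabla v$ and $F(v)=\int_\Omega fv+\int_{\Gamma_N} gv$. Let $Q:V\to\mathbb{R}$ be a continuous linear functional. Let $u^\varepsilon\in V$ satisfy $B^\varepsilon(u^\varepsilon,v)=F(v)$ for all $v\in V$, and set $\boldsymbol{q}^\varepsilon=\mathbb{A}^\varepsilon\nabla u^\varepsilon$. Let $W$ be a real vector space containing $V$ and let $Q$ be extended to a linear functional on $W$ (still denoted $Q$). Let $u^\varepsilon_H\in W$, let $\widehat{u}^\varepsilon_H\in V$ and $\widehat{\widetilde{u}}^\varepsilon_H\in V$ be arbitrary, let $\widehat{\boldsymbol{q}}^\varepsilon_H\in\mathcal{S}$ and $\widehat{\widetilde{\boldsymbol{q}}}^\varepsilon_H\in\widetilde{\mathcal{S}}$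 be arbitrary, where $\mathcal{S}=\{\boldsymbol{p}\in H(\mathrm{div},\Omega):\ \forall v\in V,\ \int_\Omega \boldsymbol{p}\cdot\nabla v=F(v)\}$ and $\widetilde{\mathcal{S}}=\{\boldsymbol{p}\in H(\mathrm{div},\Omega):\ \forall v\in V,\ \int_\Omega \boldsymbol{p}\cdot\nabla v=Q(v)\}$. Define $\Delta Q=Q(\widehat{u}^\varepsilon_H-u^\varepsilon_H)$, $$\overline{C}^\varepsilon_H=\frac12\int_\Omega(\mathbb{A}^\varepsilon)^{-1}\big(\widehat{\boldsymbol{q}}^\varepsilon_H-\mathbb{A}^\varepsilon\nabla\widehat{u}^\varepsilon_H\big)\cdot\big(\widehat{\widetilde{\boldsymbol{q}}}^\varepsilon_H+\mathbb{A}^\varepsilon\nabla\widehat{\widetilde{u}}^\varepsilon_H\big),$$ $E_{CRE}=E_{CRE}(\widehat{u}^\varepsilon_H,\widehat{\boldsymbol{q}}^\varepsilon_H)$ and $\widetilde{E}_{CRE}=E_{CRE}(\widehat{\widetilde{u}}^\varepsilon_H,\widehat{\widetilde{\boldsymbol{q}}}^\varepsilon_H)$, where for $v\in V$ and $\boldsymbol{p}\in L^2(\Omega)^d$, $E_{CRE}(v,\boldsymbol{p})=\big(\int_\Omega(\mathbb{A}^\varepsilon)^{-1}(\boldsymbol{p}-\mathbb{A}^\varepsilon\nabla v)\cdot(\boldsymbol{p}-\mathbb{A}^\varepsilon\nabla v)\big)^{1/2}$. Then $$\big|Q(u^\varepsilon)-Q(u^\varepsilon_H)-\Delta Q-\overline{C}^\varepsilon_H\big|\le\frac12\,E_{CRE}\,\widetilde{E}_{CRE},$$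 and consequently $$|Q(u^\varepsilon)-Q(u^\varepsilon_H)|\le\eta^Q:=\max_{\theta=\pm1}\Big|\Delta Q+\overline{C}^\varepsilon_H+\frac{\theta}{2}E_{CRE}\,\widetilde{E}_{CRE}\Big|.$$
   Context: $H(\mathrm{div},\Omega)$ denotes the space of vector fields in $L^2(\Omega)^d$ whose distributional divergence lies in $L^2(\Omega)$. The quantity $E_{CRE}$ is the constitutive relation error functional. In the intended application, $u^\varepsilon_H$ is a (possibly nonconforming) multiscale finite element approximation of $u^\varepsilon$, $\widehat{u}^\varepsilon_H\in V$ a conforming reconstruction of it, $\widehat{\widetilde{u}}^\varepsilon_H\in V$ an approximation of the adjoint solution $\widetilde{u}^\varepsilon\in V$ (defined by $B^\varepsilon(v,\widetilde{u}^\varepsilon)=Q(v)$ for all $v\in V$), and $\widehat{\boldsymbol{q}}^\varepsilon_H$, $\widehat{\widetilde{\boldsymbol{q}}}^\varepsilon_H$ equilibrated fluxes for the primal and adjoint problems; the statement holds for arbitrary such elements. *)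

theory Defs
  imports "HOL-Analysis.Analysis"
begin

definition C1_fun :: "((real,'d::finite) vec \<Rightarrow> real) \<Rightarrow> bool" where
  "C1_fun \<phi> \<longleftrightarrow> (\<exists>D. continuous_on UNIV D \<and>
       (\<forall>x. (\<phi> has_derivative (\<lambda>h. D x \<bullet> h)) (at x)))"

definition cgrad :: "((real,'d::finite) vec \<Rightarrow> real) \<Rightarrow> (real,'d) vec \<Rightarrow> (real,'d) vec" where
  "cgrad \<phi> x = (\<chi> i. frechet_derivative \<phi> (at x) (axis i 1))"

definition test_fn :: "(real,'d::finite) vec set \<Rightarrow> ((real,'d) vec \<Rightarrow> real) \<Rightarrow> bool" where
  "test_fn \<Omega> \<phi> \<longleftrightarrow> C1_fun \<phi> \<and> compact (closure {x. \<phi> x \<noteq> 0})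
      \<and> closure {x. \<phi> x \<noteq> 0} \<subseteq> \<Omega>"

definition sq_int :: "'a measure \<Rightarrow> ('a \<Rightarrow> real) \<Rightarrow> bool" where
  "sq_int M f \<longleftrightarrow> f \<in> borel_measurable M \<and> integrable M (\<lambda>x. (f x)\<^sup>2)"

definition vsq_int :: "'a measure \<Rightarrow> ('a \<Rightarrow> (real,'d::finite) vec) \<Rightarrow> bool" where
  "vsq_int M p \<longleftrightarrow> p \<in> borel_measurable M \<and> integrable M (\<lambda>x. (norm (p x))\<^sup>2)"

definition is_wgrad :: "(real,'d::finite) vec set \<Rightarrow> ((real,'d) vec \<Rightarrow> real)
     \<Rightarrow> ((real,'d) vec \<Rightarrow> (real,'d) vec) \<Rightarrow> bool" where
  "is_wgrad \<Omega> v G \<longleftrightarrow> (\<forall>\<phi>. test_fn \<Omega> \<phi> \<longrightarrow> (\<forall>i.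
      (LINT x|lebesgue_on \<Omega>. v x * (cgrad \<phi> x $ i))
        = - (LINT x|lebesgue_on \<Omega>. (G x $ i) * \<phi> x)))"

definition H1 :: "(real,'d::finite) vec set \<Rightarrow> ((real,'d) vec \<Rightarrow> real) \<Rightarrow> bool" where
  "H1 \<Omega> v \<longleftrightarrow> sq_int (lebesgue_on \<Omega>) v \<and>
      (\<exists>G. vsq_int (lebesgue_on \<Omega>) G \<and> is_wgrad \<Omega> v G)"

(* a (the, up to a.e. equality) weak gradient *)
definition wgrad :: "(real,'d::finite) vec set \<Rightarrow> ((real,'d) vec \<Rightarrow> real)
     \<Rightarrow> (real,'d) vec \<Rightarrow> (real,'d) vec" where
  "wgrad \<Omega> v = (SOME G. vsq_int (lebesgue_on \<Omega>) G \<and> is_wgrad \<Omega> v G)"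

definition H1_norm :: "(real,'d::finite) vec set \<Rightarrow> ((real,'d) vec \<Rightarrow> real) \<Rightarrow> real" where
  "H1_norm \<Omega> v = sqrt ((LINT x|lebesgue_on \<Omega>. (v x)\<^sup>2)
                       + (LINT x|lebesgue_on \<Omega>. (norm (wgrad \<Omega> v x))\<^sup>2))"

definition Hdiv :: "(real,'d::finite) vec set \<Rightarrow> ((real,'d) vec \<Rightarrow> (real,'d) vec) \<Rightarrow> bool" where
  "Hdiv \<Omega> p \<longleftrightarrow> vsq_int (lebesgue_on \<Omega>) p \<and>
      (\<exists>h. sq_int (lebesgue_on \<Omega>) h \<and> (\<forall>\<phi>. test_fn \<Omega> \<phi> \<longrightarrow>
          (LINT x|lebesgue_on \<Omega>. p x \<bullet> cgrad \<phi> x) = - (LINT x|lebesgue_on \<Omega>. h x * \<phi> x)))"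

definition hausdorff_pre :: "nat \<Rightarrow> real \<Rightarrow> 'a::metric_space set \<Rightarrow> ennreal" where
  "hausdorff_pre s \<delta> A = Inf {(\<Sum>i. ennreal (if C i = {} then 0 else diameter (C i) ^ s)) | C.
      A \<subseteq> (\<Union>i. C i) \<and> (\<forall>i. bounded (C i) \<and> diameter (C i) \<le> \<delta>)}"

definition hausdorff_outer :: "nat \<Rightarrow> 'a::metric_space set \<Rightarrow> ennreal" where
  "hausdorff_outer s A = ennreal (pi powr (real s / 2) / Gamma (real s / 2 + 1) / 2 ^ s)
       * (SUP \<delta>\<in>{0<..}. hausdorff_pre s \<delta> A)"

definition surface_measure :: "(real,'d::finite) vec measure" where
  "surface_measure = measure_of UNIV (sets borel) (hausdorff_outer (CARD('d) - 1))"

(* t is a boundary trace of v: limit on the boundary of C^1 (up to the boundary)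
   functions approximating v in H^1 *)
definition has_trace :: "(real,'d::finite) vec set \<Rightarrow> ((real,'d) vec \<Rightarrow> real)
     \<Rightarrow> ((real,'d) vec \<Rightarrow> real) \<Rightarrow> bool" where
  "has_trace \<Omega> v t \<longleftrightarrow> (\<exists>(\<phi>::nat \<Rightarrow> (real,'d) vec \<Rightarrow> real) G.
      vsq_int (lebesgue_on \<Omega>) G \<and> is_wgrad \<Omega> v G \<and> (\<forall>k. C1_fun (\<phi> k)) \<and>
      ((\<lambda>k. \<integral>\<^sup>+ x\<in>\<Omega>. ennreal ((\<phi> k x - v x)\<^sup>2) \<partial>lebesgue) \<longlonglongrightarrow> 0) \<and>
      ((\<lambda>k. \<integral>\<^sup>+ x\<in>\<Omega>. ennreal ((norm (cgrad (\<phi> k) x - G x))\<^sup>2) \<partial>lebesgue) \<longlonglongrightarrow> 0) \<and>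
      ((\<lambda>k. \<integral>\<^sup>+ x\<in>frontier \<Omega>. ennreal ((\<phi> k x - t x)\<^sup>2) \<partial>surface_measure) \<longlonglongrightarrow> 0))"

definition trace :: "(real,'d::finite) vec set \<Rightarrow> ((real,'d) vec \<Rightarrow> real) \<Rightarrow> (real,'d) vec \<Rightarrow> real" where
  "trace \<Omega> v = (SOME t. has_trace \<Omega> v t)"

definition Vsp :: "(real,'d::finite) vec set \<Rightarrow> (real,'d) vec set \<Rightarrow> ((real,'d) vec \<Rightarrow> real) set" where
  "Vsp \<Omega> \<Gamma>D = {v. H1 \<Omega> v \<and> (\<exists>t. has_trace \<Omega> v t \<and>
                    (AE x in surface_measure. x \<in> \<Gamma>D \<longrightarrow> t x = 0))}"

definition Ffun :: "(real,'d::finite) vec set \<Rightarrow> (real,'d) vec set \<Rightarrow> ((real,'d) vec \<Rightarrow> real)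
     \<Rightarrow> ((real,'d) vec \<Rightarrow> real) \<Rightarrow> ((real,'d) vec \<Rightarrow> real) \<Rightarrow> real" where
  "Ffun \<Omega> \<Gamma>N f g v = (LINT x|lebesgue_on \<Omega>. f x * v x)
       + (LINT x|surface_measure. indicator \<Gamma>N x * g x * trace \<Omega> v x)"

definition ECRE :: "(real,'d::finite) vec set \<Rightarrow> ((real,'d) vec \<Rightarrow> ((real,'d) vec,'d) vec)
     \<Rightarrow> ((real,'d) vec \<Rightarrow> real) \<Rightarrow> ((real,'d) vec \<Rightarrow> (real,'d) vec) \<Rightarrow> real" where
  "ECRE \<Omega> A v p = sqrt (LINT x|lebesgue_on \<Omega>.
      (matrix_inv (A x) *v (p x - A x *v wgrad \<Omega> v x)) \<bullet> (p x - A x *v wgrad \<Omega> v x))"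

definition Cbar :: "(real,'d::finite) vec set \<Rightarrow> ((real,'d) vec \<Rightarrow> ((real,'d) vec,'d) vec)
     \<Rightarrow> ((real,'d) vec \<Rightarrow> real) \<Rightarrow> ((real,'d) vec \<Rightarrow> (real,'d) vec)
     \<Rightarrow> ((real,'d) vec \<Rightarrow> real) \<Rightarrow> ((real,'d) vec \<Rightarrow> (real,'d) vec) \<Rightarrow> real" where
  "Cbar \<Omega> A uh qh uth qth = (1/2) * (LINT x|lebesgue_on \<Omega>.
      (matrix_inv (A x) *v (qh x - A x *v wgrad \<Omega> uh x)) \<bullet> (qth x + A x *v wgrad \<Omega> uth x))"

end

theory Submission imports Defs begin

lemma vec_meas_iff:
  fixes f :: "'a \<Rightarrow> real^'n"
  shows "f \<in> borel_measurable M \<longleftrightarrow> (\<forall>i. (\<lambda>x. f x $ i) \<in> borel_measurable M)"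
proof
  assume f: "f \<in> borel_measurable M"
  show "\<forall>i. (\<lambda>x. f x $ i) \<in> borel_measurable M"
    using measurable_compose[OF f borel_measurable_nth] by simp
next
  assume h: "\<forall>i. (\<lambda>x. f x $ i) \<in> borel_measurable M"
  have "\<forall>i\<in>Basis. (\<lambda>x. f x \<bullet> i) \<in> borel_measurable M"
  proof
    fix b :: "real^'n" assume "b \<in> Basis"
    then obtain i where bi: "b = axis i 1" by (auto simp: Basis_vec_def)
    have e: "(\<lambda>x. f x \<bullet> axis i 1) = (\<lambda>x. f x $ i)"
      by (rule ext, rule cart_eq_inner_axis[symmetric])
    show "(\<lambda>x. f x \<bullet> b) \<in> borel_measurable M" unfolding bi e using h by blast
  qed
  then show "f \<in> borel_measurable M"
    by (rule iffD2[OF borel_measurable_euclidean_space])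
qed

lemma det_meas:
  fixes F :: "'a \<Rightarrow> real^'n^'n"
  assumes "\<And>i j. (\<lambda>x. F x $ i $ j) \<in> borel_measurable M"
  shows "(\<lambda>x. det (F x)) \<in> borel_measurable M"
  unfolding det_def using assms by measurable

lemma mv_meas:
  fixes A :: "'a \<Rightarrow> real^'n^'m"
  assumes "\<And>i j. (\<lambda>x. A x $ i $ j) \<in> borel_measurable M" "p \<in> borel_measurable M"
  shows "(\<lambda>x. A x *v p x) \<in> borel_measurable M"
  unfolding vec_meas_iff matrix_vector_mult_def vec_lambda_beta
  apply (intro allI borel_measurable_sum borel_measurable_times)
   apply (rule assms(1))
  apply (rule measurable_compose[OF assms(2) borel_measurable_nth])
  done

lemma inv_meas:
  fixes A :: "'a \<Rightarrow> real^'n^'n"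
  assumes A: "\<And>i j. (\<lambda>x. A x $ i $ j) \<in> borel_measurable M" and p: "p \<in> borel_measurable M"
  shows "(\<lambda>x. matrix_inv (A x) *v p x) \<in> borel_measurable M"
proof -
  define c :: "real^'n^'n" where "c = (SOME A'. False)"
  have eq: "matrix_inv (A x) *v p x = (if det (A x) = 0 then c *v p x else
     (\<chi> k. det(\<chi> i j. if j=k then p x$i else A x$i$j) / det (A x)))" for x
  proof (cases "det (A x) = 0")
    case True
    then have "\<not> invertible (A x)" using invertible_det_nz by blast
    then have "(\<lambda>A'. A x ** A' = mat 1 \<and> A' ** A x = mat 1) = (\<lambda>_. False)"
      unfolding invertible_def by auto
    then have "matrix_inv (A x) = c" unfolding matrix_inv_def c_def by simp
    then show ?thesis using True by simp
  next
    case False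
    then have "invertible (A x)" using invertible_det_nz by blast
    then have "A x ** matrix_inv (A x) = mat 1" unfolding matrix_inv_def invertible_def
      by (metis (mono_tags, lifting) someI_ex)
    then have "A x *v (matrix_inv (A x) *v p x) = p x"
      by (simp add: matrix_vector_mul_assoc)
    then show ?thesis using False cramer[OF False] by simp
  qed
  have m1: "(\<lambda>x. det (A x)) \<in> borel_measurable M" by (rule det_meas[OF A])
  have m2: "(\<lambda>x. det (\<chi> i j. if j=k then p x$i else A x$i$j)) \<in> borel_measurable M" for k
    by (rule det_meas, case_tac "j = k") (simp_all add: A measurable_compose[OF p borel_measurable_nth])
  have m3: "(\<lambda>x. c *v p x) \<in> borel_measurable M"
    by (rule mv_meas) (use p in auto)
  have m4: "(\<lambda>x. (\<chi> k. det(\<chi> i j. if j=k then p x$i else A x$i$j) / det (A x)) :: real^'n) \<in> borel_measurable M"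
    unfolding vec_meas_iff using m1 m2 by simp
  show ?thesis unfolding eq
    by (rule measurable_If[OF m3 m4]) (use m1 in measurable)
qed

lemma sq_tri: "(norm (a + b::'v::real_normed_vector))\<^sup>2 \<le> 2*(norm a)\<^sup>2 + 2*(norm b)\<^sup>2"
proof -
  have "norm (a+b) \<le> norm a + norm b" by (rule norm_triangle_ineq)
  then have "(norm (a+b))\<^sup>2 \<le> (norm a + norm b)\<^sup>2" by (rule power_mono) simp
  also have "\<dots> \<le> 2*(norm a)\<^sup>2 + 2*(norm b)\<^sup>2"
    using sum_squares_ge_zero[of "norm a - norm b" 0] by (simp add: power2_eq_square algebra_simps)
  finally show ?thesis .
qed

lemma vsq_meas: "vsq_int M p \<Longrightarrow> p \<in> borel_measurable M"
  unfolding vsq_int_def by simp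

lemma vsq_add:
  assumes "vsq_int M p" "vsq_int M (r :: _ \<Rightarrow> real^'n)"
  shows "vsq_int M (\<lambda>x. p x + r x)"
  unfolding vsq_int_def
proof
  show m: "(\<lambda>x. p x + r x) \<in> borel_measurable M"
    using assms by (auto simp: vsq_int_def intro: borel_measurable_add)
  have i: "integrable M (\<lambda>x. 2*(norm (p x))\<^sup>2 + 2*(norm (r x))\<^sup>2)"
    using assms by (simp add: vsq_int_def)
  show "integrable M (\<lambda>x. (norm (p x + r x))\<^sup>2)"
    by (rule Bochner_Integration.integrable_bound[OF i]) (use m sq_tri[of "p _" "r _"] in auto)
qed

lemma vsq_scale:
  assumes "vsq_int M (p :: _ \<Rightarrow> real^'n)"
  shows "vsq_int M (\<lambda>x. c *\<^sub>R p x)"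
  using assms unfolding vsq_int_def by (auto simp: power_mult_distrib intro: borel_measurable_scaleR)

lemma vsq_diff:
  assumes "vsq_int M p" "vsq_int M (r :: _ \<Rightarrow> real^'n)"
  shows "vsq_int M (\<lambda>x. p x - r x)"
  using vsq_add[OF assms(1) vsq_scale[OF assms(2), of "-1"]] by simp

lemma inner_int:
  assumes "vsq_int M p" "vsq_int M (r :: _ \<Rightarrow> real^'n)"
  shows "integrable M (\<lambda>x. p x \<bullet> r x)"
proof -
  have i: "integrable M (\<lambda>x. (norm (p x))\<^sup>2 + (norm (r x))\<^sup>2)"
    using assms by (simp add: vsq_int_def)
  have m: "(\<lambda>x. p x \<bullet> r x) \<in> borel_measurable M"
    using assms by (auto simp: vsq_int_def intro: borel_measurable_inner)
  have b: "\<bar>a \<bullet> b\<bar> \<le> \<bar>(norm a)\<^sup>2 + (norm b)\<^sup>2\<bar>" for a b :: "real^'n"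
  proof -
    have "\<bar>a \<bullet> b\<bar> \<le> norm a * norm b" by (rule Cauchy_Schwarz_ineq2)
    also have "\<dots> \<le> (norm a)\<^sup>2 + (norm b)\<^sup>2"
    proof -
      have "0 \<le> (norm a - norm b)\<^sup>2" by simp
      then have h: "2*(norm a * norm b) \<le> (norm a)\<^sup>2 + (norm b)\<^sup>2" by (simp add: power2_eq_square algebra_simps)
      have "0 \<le> norm a * norm b" by simp
      with h show ?thesis by linarith
    qed
    finally show ?thesis by simp
  qed
  show ?thesis by (rule Bochner_Integration.integrable_bound[OF i m]) (use b in auto)
qed

lemma vsq_matf:
  assumes p: "vsq_int M (p :: _ \<Rightarrow> real^'n)"
    and m: "(\<lambda>x. B x *v p x) \<in> borel_measurable M"
    and b: "AE x in M. \<forall>\<xi>. norm (B x *v \<xi>) \<le> K * norm \<xi>"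
  shows "vsq_int M (\<lambda>x. (B x :: real^'n^'m) *v p x)"
  unfolding vsq_int_def
proof
  show "(\<lambda>x. B x *v p x) \<in> borel_measurable M" by (rule m)
  have i: "integrable M (\<lambda>x. K\<^sup>2 * (norm (p x))\<^sup>2)"
    using p by (simp add: vsq_int_def)
  have m2: "(\<lambda>x. (norm (B x *v p x))\<^sup>2) \<in> borel_measurable M" using m by simp
  show "integrable M (\<lambda>x. (norm (B x *v p x))\<^sup>2)"
  proof (rule Bochner_Integration.integrable_bound[OF i m2])
    show "AE x in M. norm ((norm (B x *v p x))\<^sup>2) \<le> norm (K\<^sup>2 * (norm (p x))\<^sup>2)"
      using b
    proof eventually_elim
      case (elim x)
      then have "norm (B x *v p x) \<le> K * norm (p x)" by blast
      then have "(norm (B x *v p x))\<^sup>2 \<le> (K * norm (p x))\<^sup>2" by (rule power_mono) simp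
      then show ?case by (simp add: power_mult_distrib)
    qed
  qed
qed


lemma sym_inner:
  fixes A :: "real^'n^'n"
  assumes "transpose A = A"
  shows "(A *v x) \<bullet> y = x \<bullet> (A *v y)"
proof -
  have "(A *v x) \<bullet> y = (transpose A *v x) \<bullet> y" using assms by simp
  also have "\<dots> = x \<bullet> (A *v y)" by (simp add: dot_lmul_matrix)
  finally show ?thesis .
qed

lemma pw_facts:
  fixes A :: "real^'n^'n"
  assumes sym: "transpose A = A" and a: "0 < \<alpha>" and ell: "\<forall>\<xi>. \<alpha> * (norm \<xi>)\<^sup>2 \<le> (A *v \<xi>) \<bullet> \<xi>"
  shows "\<forall>y. matrix_inv A *v (A *v y) = y"
    and "\<forall>y. A *v (matrix_inv A *v y) = y"
    and "\<forall>x y. (matrix_inv A *v x) \<bullet> y = x \<bullet> (matrix_inv A *v y)"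
    and "\<forall>x. 0 \<le> (matrix_inv A *v x) \<bullet> x"
    and "\<forall>x. norm (matrix_inv A *v x) \<le> (1/\<alpha>) * norm x"
proof -
  have z: "A *v x = 0 \<Longrightarrow> x = 0" for x
  proof -
    assume "A *v x = 0"
    then have "\<alpha> * (norm x)\<^sup>2 \<le> 0" using ell[rule_format, of x] by simp
    then have "(norm x)\<^sup>2 \<le> 0" using a by (simp add: mult_le_0_iff)
    then show "x = 0" by simp
  qed
  have "inj ((*v) A)"
  proof (rule injI)
    fix x y assume "A *v x = A *v y"
    then have "A *v (x - y) = 0" by (simp add: matrix_vector_mult_diff_distrib)
    then have "x - y = 0" by (rule z)
    then show "x = y" by simp
  qed
  then have "invertible A" using matrix_left_invertible_injective invertible_left_inverse by blast
  then have inv: "A ** matrix_inv A = mat 1 \<and> matrix_inv A ** A = mat 1"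
    unfolding matrix_inv_def invertible_def by (metis (mono_tags, lifting) someI_ex)
  show l: "\<forall>y. matrix_inv A *v (A *v y) = y"
    using inv by (simp add: matrix_vector_mul_assoc)
  show r: "\<forall>y. A *v (matrix_inv A *v y) = y"
    using inv by (simp add: matrix_vector_mul_assoc)
  show "\<forall>x y. (matrix_inv A *v x) \<bullet> y = x \<bullet> (matrix_inv A *v y)"
  proof (intro allI)
    fix x y
    have "(matrix_inv A *v x) \<bullet> y = (matrix_inv A *v x) \<bullet> (A *v (matrix_inv A *v y))" using r by simp
    also have "\<dots> = (A *v (matrix_inv A *v x)) \<bullet> (matrix_inv A *v y)" using sym_inner[OF sym] by simp
    also have "\<dots> = x \<bullet> (matrix_inv A *v y)" using r by simp
    finally show "(matrix_inv A *v x) \<bullet> y = x \<bullet> (matrix_inv A *v y)" .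
  qed
  have key: "\<alpha> * (norm (matrix_inv A *v x))\<^sup>2 \<le> (matrix_inv A *v x) \<bullet> x" for x
  proof -
    have "\<alpha> * (norm (matrix_inv A *v x))\<^sup>2 \<le> (A *v (matrix_inv A *v x)) \<bullet> (matrix_inv A *v x)"
      using ell by blast
    also have "\<dots> = (matrix_inv A *v x) \<bullet> x" using r by (simp add: inner_commute)
    finally show ?thesis .
  qed
  show "\<forall>x. 0 \<le> (matrix_inv A *v x) \<bullet> x"
  proof
    fix x
    have "0 \<le> \<alpha> * (norm (matrix_inv A *v x))\<^sup>2" using a by simp
    then show "0 \<le> (matrix_inv A *v x) \<bullet> x" using key[of x] by linarith
  qed
  show "\<forall>x. norm (matrix_inv A *v x) \<le> (1/\<alpha>) * norm x"
  proof
    fix x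
    let ?y = "matrix_inv A *v x"
    have "\<alpha> * (norm ?y)\<^sup>2 \<le> norm ?y * norm x"
      using key[of x] Cauchy_Schwarz_ineq2[of ?y x] by (simp add: abs_le_iff)
    then have h: "norm ?y * (\<alpha> * norm ?y) \<le> norm ?y * norm x" by (simp add: power2_eq_square algebra_simps)
    show "norm ?y \<le> (1/\<alpha>) * norm x"
    proof (cases "norm ?y = 0")
      case True then show ?thesis using a by simp
    next
      case False
      then have "\<alpha> * norm ?y \<le> norm x" using h by (simp add: mult_le_cancel_left)
      then show ?thesis using a by (simp add: field_simps)
    qed
  qed
qed


lemma mat_bound:
  fixes A :: "real^'n^'m"
  assumes "\<forall>i j. \<bar>A $ i $ j\<bar> \<le> K"
  shows "norm (A *v \<xi>) \<le> (real CARD('m) * real CARD('n) * K) * norm \<xi>"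
proof -
  have K: "0 \<le> K" using assms by (meson abs_ge_zero order_trans)
  have c: "\<bar>(A *v \<xi>) $ i\<bar> \<le> real CARD('n) * (K * norm \<xi>)" for i
  proof -
    have "\<bar>(A *v \<xi>) $ i\<bar> = \<bar>\<Sum>j\<in>UNIV. A$i$j * \<xi>$j\<bar>" by (simp add: matrix_vector_mult_def)
    also have "\<dots> \<le> (\<Sum>j\<in>UNIV. \<bar>A$i$j * \<xi>$j\<bar>)" by (rule sum_abs)
    also have "\<dots> \<le> (\<Sum>j\<in>(UNIV::'n set). K * norm \<xi>)"
    proof (rule sum_mono)
      fix j :: 'n
      show "\<bar>A$i$j * \<xi>$j\<bar> \<le> K * norm \<xi>"
        unfolding abs_mult using assms component_le_norm_cart[of \<xi> j] K
        by (intro mult_mono) auto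
    qed
    also have "\<dots> = real CARD('n) * (K * norm \<xi>)" by simp
    finally show ?thesis .
  qed
  have "norm (A *v \<xi>) \<le> (\<Sum>i\<in>UNIV. \<bar>(A *v \<xi>) $ i\<bar>)" by (rule norm_le_l1_cart)
  also have "\<dots> \<le> (\<Sum>i\<in>(UNIV::'m set). real CARD('n) * (K * norm \<xi>))" by (rule sum_mono) (rule c)
  also have "\<dots> = (real CARD('m) * real CARD('n) * K) * norm \<xi>" by simp
  finally show ?thesis .
qed

lemma pw_ident1:
  fixes A B :: "real^'n^'n"
  assumes l: "\<forall>y. B *v (A *v y) = y"
    and sB: "\<forall>x y. (B *v x) \<bullet> y = x \<bullet> (B *v y)"
    and sA: "\<forall>x y. (A *v x) \<bullet> y = x \<bullet> (A *v y)"
  shows "(B *v (qt - A *v gt)) \<bullet> (A *v gu - (1/2) *\<^sub>R (qh + A *v gh))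
         + (1/2) * ((B *v (qh - A *v gh)) \<bullet> (qt + A *v gt))
       = qt \<bullet> gu - (A *v gu) \<bullet> gt + qh \<bullet> gt - qt \<bullet> gh"
proof -
  have e1: "(B *v qt) \<bullet> (A *v gu) = qt \<bullet> gu" using sB l by simp
  have e2: "(B *v qh) \<bullet> qt = (B *v qt) \<bullet> qh" using sB by (simp add: inner_commute)
  have e3: "(B *v qt) \<bullet> (A *v gh) = qt \<bullet> gh" using sB l by simp
  have e4: "gt \<bullet> (A *v gu) = (A *v gu) \<bullet> gt" by (simp add: inner_commute)
  have e5: "gt \<bullet> qh = qh \<bullet> gt" by (simp add: inner_commute)
  have e6: "(B *v qh) \<bullet> (A *v gt) = qh \<bullet> gt" using sB l by simp
  have e7: "gh \<bullet> qt = qt \<bullet> gh" by (simp add: inner_commute)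
  have e8: "gh \<bullet> (A *v gt) = gt \<bullet> (A *v gh)" using sA by (metis inner_commute)
  show ?thesis
    by (simp add: e1 e2 e3 e4 e5 e6 e7 e8 l inner_diff_left inner_diff_right inner_add_left inner_add_right
        matrix_vector_mult_diff_distrib matrix_vector_right_distrib algebra_simps)
qed

lemma pw_ident2:
  fixes A B :: "real^'n^'n"
  assumes l: "\<forall>y. B *v (A *v y) = y"
    and sB: "\<forall>x y. (B *v x) \<bullet> y = x \<bullet> (B *v y)"
    and sA: "\<forall>x y. (A *v x) \<bullet> y = x \<bullet> (A *v y)"
  shows "(B *v (A *v gu - (1/2) *\<^sub>R (qh + A *v gh))) \<bullet> (A *v gu - (1/2) *\<^sub>R (qh + A *v gh))
       = (1/4) * ((B *v (qh - A *v gh)) \<bullet> (qh - A *v gh)) + (A *v gu - qh) \<bullet> (gu - gh)"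
proof -
  have f1: "(B *v qh) \<bullet> (A *v gu) = gu \<bullet> qh" using sB l by (simp add: inner_commute)
  have f2: "(B *v qh) \<bullet> (A *v gh) = gh \<bullet> qh" using sB l by (simp add: inner_commute)
  have f3: "(A *v gu) \<bullet> gu = gu \<bullet> (A *v gu)" by (simp add: inner_commute)
  have f4: "(A *v gu) \<bullet> gh = gu \<bullet> (A *v gh)" using sA by simp
  have f5: "gh \<bullet> (A *v gu) = gu \<bullet> (A *v gh)" using sA by (metis inner_commute)
  have f6: "qh \<bullet> gu = gu \<bullet> qh" by (simp add: inner_commute)
  have f7: "qh \<bullet> gh = gh \<bullet> qh" by (simp add: inner_commute)
  show ?thesis
    by (simp add: f1 f2 f3 f4 f5 f6 f7 l inner_diff_left inner_diff_right inner_add_left inner_add_right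
        matrix_vector_mult_diff_distrib matrix_vector_right_distrib matrix_vector_mult_scaleR algebra_simps)
qed

lemma pw_ident3:
  fixes B :: "real^'n^'n"
  assumes sB: "\<forall>x y. (B *v x) \<bullet> y = x \<bullet> (B *v y)"
  shows "(B *v (s + t *\<^sub>R w)) \<bullet> (s + t *\<^sub>R w)
       = (B *v s) \<bullet> s + 2 * t * ((B *v s) \<bullet> w) + t\<^sup>2 * ((B *v w) \<bullet> w)"
proof -
  have "(B *v w) \<bullet> s = (B *v s) \<bullet> w" using sB by (metis inner_commute)
  then show ?thesis
    by (simp add: inner_add_left inner_add_right matrix_vector_right_distrib matrix_vector_mult_scaleR
        power2_eq_square algebra_simps)
qed

lemma quad_cs:
  fixes a b c :: real
  assumes "\<forall>t. 0 \<le> a + 2 * t * b + t\<^sup>2 * c" "0 \<le> c"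
  shows "b\<^sup>2 \<le> a * c"
proof (cases "c = 0")
  case True
  show ?thesis
  proof (rule ccontr)
    assume "\<not> ?thesis"
    then have b: "b \<noteq> 0" using True by simp
    have "0 \<le> a + 2 * (-(a+1)/(2*b)) * b" using assms(1)[rule_format, of "-(a+1)/(2*b)"] True by simp
    then show False using b by (simp add: field_simps)
  qed
next
  case False
  then have c: "0 < c" using assms(2) by simp
  have "0 \<le> a + 2 * (-b/c) * b + (-b/c)\<^sup>2 * c" using assms(1) by blast
  also have "\<dots> = a - b\<^sup>2 / c" using c by (simp add: power2_eq_square field_simps)
  finally show ?thesis using c by (simp add: field_simps)
qed


lemma maxlem:
  fixes a b c d h :: real
  assumes "\<bar>a - b - c - d\<bar> \<le> h" "0 \<le> h"
  shows "\<bar>a - b\<bar> \<le> max \<bar>c + d + h\<bar> \<bar>c + d - h\<bar>"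
  using assms by (smt (verit))

lemma int_eq_AE:
  assumes "integrable M f" "integrable M g" "AE x in M. f x = (g x :: real)"
  shows "integral\<^sup>L M f = integral\<^sup>L M g"
  using assms by (intro integral_cong_AE) auto

lemma wg:
  assumes "v \<in> Vsp \<Omega> \<Gamma>D"
  shows "vsq_int (lebesgue_on \<Omega>) (wgrad \<Omega> v) \<and> is_wgrad \<Omega> v (wgrad \<Omega> v)"
proof -
  from assms have "\<exists>G. vsq_int (lebesgue_on \<Omega>) G \<and> is_wgrad \<Omega> v G"
    unfolding Vsp_def H1_def by blast
  then show ?thesis unfolding wgrad_def by (rule someI_ex)
qed

theorem mainTheorem1:
  fixes \<Omega> \<Gamma>D \<Gamma>N :: "(real,'d::finite) vec set"
    and A :: "(real,'d) vec \<Rightarrow> ((real,'d) vec,'d) vec"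
    and \<alpha> \<beta> :: real
    and f g :: "(real,'d) vec \<Rightarrow> real"
    and QW :: "'w::real_vector \<Rightarrow> real"
    and \<iota> :: "((real,'d) vec \<Rightarrow> real) \<Rightarrow> 'w"
    and u uh uth :: "(real,'d) vec \<Rightarrow> real"
    and uH :: 'w
    and qh qth :: "(real,'d) vec \<Rightarrow> (real,'d) vec"
  assumes \<Omega>: "open \<Omega>" "bounded \<Omega>"
    and \<Gamma>D: "\<Gamma>D \<subseteq> frontier \<Omega>" "emeasure surface_measure \<Gamma>D > 0"
    and \<Gamma>N: "\<Gamma>N = frontier \<Omega> - \<Gamma>D"
    and A_meas: "\<forall>i j. (\<lambda>x. A x $ i $ j) \<in> borel_measurable (lebesgue_on \<Omega>)"
    and A_bdd: "\<exists>M. AE x in lebesgue_on \<Omega>. \<forall>i j. \<bar>A x $ i $ j\<bar> \<le> M"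
    and A_sym: "AE x in lebesgue_on \<Omega>. transpose (A x) = A x"
    and \<alpha>\<beta>: "0 < \<alpha>" "\<alpha> \<le> \<beta>"
    and A_ell: "AE x in lebesgue_on \<Omega>. \<forall>\<xi>.
                  \<alpha> * (norm \<xi>)\<^sup>2 \<le> (A x *v \<xi>) \<bullet> \<xi> \<and> (A x *v \<xi>) \<bullet> \<xi> \<le> \<beta> * (norm \<xi>)\<^sup>2"
    and f: "sq_int (lebesgue_on \<Omega>) f"
    and g: "g \<in> borel_measurable surface_measure"
           "integrable surface_measure (\<lambda>x. indicator \<Gamma>N x * (g x)\<^sup>2)"
    and QW_lin: "linear QW"
    and \<iota>_lin: "\<forall>v\<in>Vsp \<Omega> \<Gamma>D. \<forall>w\<in>Vsp \<Omega> \<Gamma>D. \<iota> (\<lambda>x. v x + w x) = \<iota> v + \<iota> w"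
              "\<forall>c. \<forall>v\<in>Vsp \<Omega> \<Gamma>D. \<iota> (\<lambda>x. c * v x) = c *\<^sub>R \<iota> v"
    and Q_cont: "\<exists>C. \<forall>v\<in>Vsp \<Omega> \<Gamma>D. \<bar>QW (\<iota> v)\<bar> \<le> C * H1_norm \<Omega> v"
    and u: "u \<in> Vsp \<Omega> \<Gamma>D"
           "\<forall>v\<in>Vsp \<Omega> \<Gamma>D. \<forall>G. vsq_int (lebesgue_on \<Omega>) G \<and> is_wgrad \<Omega> v G \<longrightarrow>
              (LINT x|lebesgue_on \<Omega>. (A x *v wgrad \<Omega> u x) \<bullet> G x) = Ffun \<Omega> \<Gamma>N f g v"
    and uh: "uh \<in> Vsp \<Omega> \<Gamma>D" and uth: "uth \<in> Vsp \<Omega> \<Gamma>D"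
    and qh: "Hdiv \<Omega> qh"
            "\<forall>v\<in>Vsp \<Omega> \<Gamma>D. \<forall>G. vsq_int (lebesgue_on \<Omega>) G \<and> is_wgrad \<Omega> v G \<longrightarrow>
              (LINT x|lebesgue_on \<Omega>. qh x \<bullet> G x) = Ffun \<Omega> \<Gamma>N f g v"
    and qth: "Hdiv \<Omega> qth"
            "\<forall>v\<in>Vsp \<Omega> \<Gamma>D. \<forall>G. vsq_int (lebesgue_on \<Omega>) G \<and> is_wgrad \<Omega> v G \<longrightarrow>
              (LINT x|lebesgue_on \<Omega>. qth x \<bullet> G x) = QW (\<iota> v)"
  shows "let \<Delta>Q = QW (\<iota> uh - uH);
             C = Cbar \<Omega> A uh qh uth qth;
             E = ECRE \<Omega> A uh qh;
             Et = ECRE \<Omega> A uth qth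
         in \<bar>QW (\<iota> u) - QW uH - \<Delta>Q - C\<bar> \<le> (1/2) * E * Et
          \<and> \<bar>QW (\<iota> u) - QW uH\<bar> \<le> max \<bar>\<Delta>Q + C + (1/2) * E * Et\<bar> \<bar>\<Delta>Q + C - (1/2) * E * Et\<bar>"
proof -
  let ?M = "lebesgue_on \<Omega>"
  obtain Mb where Mb: "AE x in ?M. \<forall>i j. \<bar>A x $ i $ j\<bar> \<le> Mb" using A_bdd by blast
  let ?K = "real CARD('d) * real CARD('d) * Mb"
  have good: "AE x in ?M. transpose (A x) = A x \<and> (\<forall>\<xi>. \<alpha> * (norm \<xi>)\<^sup>2 \<le> (A x *v \<xi>) \<bullet> \<xi>)
      \<and> (\<forall>i j. \<bar>A x $ i $ j\<bar> \<le> Mb)"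
    using A_sym A_ell Mb by eventually_elim blast
  have gl: "AE x in ?M. (\<forall>y. matrix_inv (A x) *v (A x *v y) = y)
      \<and> (\<forall>x' y. (matrix_inv (A x) *v x') \<bullet> y = x' \<bullet> (matrix_inv (A x) *v y))
      \<and> (\<forall>x'. 0 \<le> (matrix_inv (A x) *v x') \<bullet> x')
      \<and> (\<forall>x'. norm (matrix_inv (A x) *v x') \<le> (1/\<alpha>) * norm x')
      \<and> (\<forall>x' y. (A x *v x') \<bullet> y = x' \<bullet> (A x *v y))
      \<and> (\<forall>\<xi>. norm (A x *v \<xi>) \<le> ?K * norm \<xi>)"
    using good
  proof eventually_elim
    case (elim x)
    then have s: "transpose (A x) = A x" and e: "\<forall>\<xi>. \<alpha> * (norm \<xi>)\<^sup>2 \<le> (A x *v \<xi>) \<bullet> \<xi>"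
      and b: "\<forall>i j. \<bar>A x $ i $ j\<bar> \<le> Mb" by auto
    note P = pw_facts[OF s \<alpha>\<beta>(1) e]
    show ?case using P(1) P(3) P(4) P(5) sym_inner[OF s] mat_bound[OF b] by blast
  qed
  have Ameas: "\<And>i j. (\<lambda>x. A x $ i $ j) \<in> borel_measurable ?M" using A_meas by blast
  have Abd: "AE x in ?M. \<forall>\<xi>. norm (A x *v \<xi>) \<le> ?K * norm \<xi>" using gl by eventually_elim blast
  have Bbd: "AE x in ?M. \<forall>\<xi>. norm (matrix_inv (A x) *v \<xi>) \<le> (1/\<alpha>) * norm \<xi>" using gl by eventually_elim blast
  have vA: "vsq_int ?M (\<lambda>x. A x *v p x)" if "vsq_int ?M p" for p
    by (rule vsq_matf[OF that mv_meas[OF Ameas vsq_meas[OF that]] Abd])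
  have vB: "vsq_int ?M (\<lambda>x. matrix_inv (A x) *v p x)" if "vsq_int ?M p" for p
    by (rule vsq_matf[OF that inv_meas[OF Ameas vsq_meas[OF that]] Bbd])

  define Gu where "Gu = wgrad \<Omega> u"
  define Gh where "Gh = wgrad \<Omega> uh"
  define Gt where "Gt = wgrad \<Omega> uth"
  have wu: "vsq_int ?M Gu" "is_wgrad \<Omega> u Gu" using wg[OF u(1)] Gu_def by auto
  have wh: "vsq_int ?M Gh" "is_wgrad \<Omega> uh Gh" using wg[OF uh] Gh_def by auto
  have wt: "vsq_int ?M Gt" "is_wgrad \<Omega> uth Gt" using wg[OF uth] Gt_def by auto
  have vqh: "vsq_int ?M qh" using qh(1) unfolding Hdiv_def by blast
  have vqt: "vsq_int ?M qth" using qth(1) unfolding Hdiv_def by blast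
  have vq: "vsq_int ?M (\<lambda>x. A x *v Gu x)" by (rule vA[OF wu(1)])
  have vph: "vsq_int ?M (\<lambda>x. A x *v Gh x)" by (rule vA[OF wh(1)])
  have vpt: "vsq_int ?M (\<lambda>x. A x *v Gt x)" by (rule vA[OF wt(1)])
  define sg where "sg = (\<lambda>x. qh x - A x *v Gh x)"
  define st where "st = (\<lambda>x. qth x - A x *v Gt x)"
  define w where "w = (\<lambda>x. A x *v Gu x - (1/2) *\<^sub>R (qh x + A x *v Gh x))"
  have vsg: "vsq_int ?M sg" unfolding sg_def by (rule vsq_diff[OF vqh vph])
  have vst: "vsq_int ?M st" unfolding st_def by (rule vsq_diff[OF vqt vpt])
  have vw: "vsq_int ?M w" unfolding w_def by (rule vsq_diff[OF vq vsq_scale[OF vsq_add[OF vqh vph]]])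
  have vBsg: "vsq_int ?M (\<lambda>x. matrix_inv (A x) *v sg x)" by (rule vB[OF vsg])
  have vBst: "vsq_int ?M (\<lambda>x. matrix_inv (A x) *v st x)" by (rule vB[OF vst])
  have vBw: "vsq_int ?M (\<lambda>x. matrix_inv (A x) *v w x)" by (rule vB[OF vw])

  have Qu: "QW (\<iota> u) = (LINT x|?M. qth x \<bullet> Gu x)" using qth(2) u(1) wu by auto
  have Qh: "QW (\<iota> uh) = (LINT x|?M. qth x \<bullet> Gh x)" using qth(2) uh wh by auto
  have Ft1: "(LINT x|?M. (A x *v Gu x) \<bullet> Gt x) = Ffun \<Omega> \<Gamma>N f g uth" using u(2) uth wt Gu_def by auto
  have Ft2: "(LINT x|?M. qh x \<bullet> Gt x) = Ffun \<Omega> \<Gamma>N f g uth" using qh(2) uth wt by auto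
  have Fu1: "(LINT x|?M. (A x *v Gu x) \<bullet> Gu x) = Ffun \<Omega> \<Gamma>N f g u" using u(2) u(1) wu Gu_def by auto
  have Fu2: "(LINT x|?M. qh x \<bullet> Gu x) = Ffun \<Omega> \<Gamma>N f g u" using qh(2) u(1) wu by auto
  have Fh1: "(LINT x|?M. (A x *v Gu x) \<bullet> Gh x) = Ffun \<Omega> \<Gamma>N f g uh" using u(2) uh wh Gu_def by auto
  have Fh2: "(LINT x|?M. qh x \<bullet> Gh x) = Ffun \<Omega> \<Gamma>N f g uh" using qh(2) uh wh by auto

  define X where "X = (LINT x|?M. (matrix_inv (A x) *v st x) \<bullet> w x)"
  define E2 where "E2 = (LINT x|?M. (matrix_inv (A x) *v sg x) \<bullet> sg x)"
  define Et2 where "Et2 = (LINT x|?M. (matrix_inv (A x) *v st x) \<bullet> st x)"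
  define W where "W = (LINT x|?M. (matrix_inv (A x) *v w x) \<bullet> w x)"
  have CB: "Cbar \<Omega> A uh qh uth qth = (1/2) * (LINT x|?M. (matrix_inv (A x) *v sg x) \<bullet> (qth x + A x *v Gt x))"
    unfolding Cbar_def sg_def Gh_def Gt_def ..
  have EE: "ECRE \<Omega> A uh qh = sqrt E2" unfolding ECRE_def E2_def sg_def Gh_def ..
  have EEt: "ECRE \<Omega> A uth qth = sqrt Et2" unfolding ECRE_def Et2_def st_def Gt_def ..

  have Bsym: "AE x in ?M. \<forall>x' y. (matrix_inv (A x) *v x') \<bullet> y = x' \<bullet> (matrix_inv (A x) *v y)"
    using gl by eventually_elim blast
  have Bpos: "AE x in ?M. \<forall>x'. 0 \<le> (matrix_inv (A x) *v x') \<bullet> x'"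
    using gl by eventually_elim blast

  have iX: "integrable ?M (\<lambda>x. (matrix_inv (A x) *v st x) \<bullet> w x)" by (rule inner_int[OF vBst vw])
  have iC: "integrable ?M (\<lambda>x. (matrix_inv (A x) *v sg x) \<bullet> (qth x + A x *v Gt x))"
    by (rule inner_int[OF vBsg vsq_add[OF vqt vpt]])
  have j1: "integrable ?M (\<lambda>x. qth x \<bullet> Gu x)" by (rule inner_int[OF vqt wu(1)])
  have j2: "integrable ?M (\<lambda>x. (A x *v Gu x) \<bullet> Gt x)" by (rule inner_int[OF vq wt(1)])
  have j3: "integrable ?M (\<lambda>x. qh x \<bullet> Gt x)" by (rule inner_int[OF vqh wt(1)])
  have j4: "integrable ?M (\<lambda>x. qth x \<bullet> Gh x)" by (rule inner_int[OF vqt wh(1)])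
  have "X + Cbar \<Omega> A uh qh uth qth = (LINT x|?M. (matrix_inv (A x) *v st x) \<bullet> w x
          + (1/2) * ((matrix_inv (A x) *v sg x) \<bullet> (qth x + A x *v Gt x)))"
    unfolding CB X_def using iX iC by (simp add: integral_add)
  also have "\<dots> = (LINT x|?M. qth x \<bullet> Gu x - (A x *v Gu x) \<bullet> Gt x + qh x \<bullet> Gt x - qth x \<bullet> Gh x)"
  proof (rule int_eq_AE)
    show "integrable ?M (\<lambda>x. (matrix_inv (A x) *v st x) \<bullet> w x
          + (1/2) * ((matrix_inv (A x) *v sg x) \<bullet> (qth x + A x *v Gt x)))" using iX iC by simp
    show "integrable ?M (\<lambda>x. qth x \<bullet> Gu x - (A x *v Gu x) \<bullet> Gt x + qh x \<bullet> Gt x - qth x \<bullet> Gh x)"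
      using j1 j2 j3 j4 by simp
    show "AE x in ?M. (matrix_inv (A x) *v st x) \<bullet> w x
          + (1/2) * ((matrix_inv (A x) *v sg x) \<bullet> (qth x + A x *v Gt x))
        = qth x \<bullet> Gu x - (A x *v Gu x) \<bullet> Gt x + qh x \<bullet> Gt x - qth x \<bullet> Gh x"
      using gl
    proof eventually_elim
      case (elim x)
      then have l: "\<forall>y. matrix_inv (A x) *v (A x *v y) = y"
        and sB: "\<forall>x' y. (matrix_inv (A x) *v x') \<bullet> y = x' \<bullet> (matrix_inv (A x) *v y)"
        and sA: "\<forall>x' y. (A x *v x') \<bullet> y = x' \<bullet> (A x *v y)" by auto
      show ?case unfolding st_def sg_def w_def by (rule pw_ident1[OF l sB sA])
    qed
  qed
  also have "\<dots> = (LINT x|?M. qth x \<bullet> Gu x) - (LINT x|?M. (A x *v Gu x) \<bullet> Gt x)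
       + (LINT x|?M. qh x \<bullet> Gt x) - (LINT x|?M. qth x \<bullet> Gh x)"
    using j1 j2 j3 j4 by (simp add: integral_add integral_diff)
  finally have S1: "X + Cbar \<Omega> A uh qh uth qth = QW (\<iota> u) - QW (\<iota> uh)"
    using Qu Qh Ft1 Ft2 by simp
  have DQ: "QW (\<iota> uh - uH) = QW (\<iota> uh) - QW uH" by (rule linear_diff[OF QW_lin])

  have iW: "integrable ?M (\<lambda>x. (matrix_inv (A x) *v w x) \<bullet> w x)" by (rule inner_int[OF vBw vw])
  have iE: "integrable ?M (\<lambda>x. (matrix_inv (A x) *v sg x) \<bullet> sg x)" by (rule inner_int[OF vBsg vsg])
  have iEt: "integrable ?M (\<lambda>x. (matrix_inv (A x) *v st x) \<bullet> st x)" by (rule inner_int[OF vBst vst])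
  have vd: "vsq_int ?M (\<lambda>x. A x *v Gu x - qh x)" by (rule vsq_diff[OF vq vqh])
  have k1: "integrable ?M (\<lambda>x. (A x *v Gu x - qh x) \<bullet> Gu x)" by (rule inner_int[OF vd wu(1)])
  have k2: "integrable ?M (\<lambda>x. (A x *v Gu x - qh x) \<bullet> Gh x)" by (rule inner_int[OF vd wh(1)])
  have k3: "integrable ?M (\<lambda>x. (A x *v Gu x) \<bullet> Gu x)" by (rule inner_int[OF vq wu(1)])
  have k4: "integrable ?M (\<lambda>x. qh x \<bullet> Gu x)" by (rule inner_int[OF vqh wu(1)])
  have k5: "integrable ?M (\<lambda>x. (A x *v Gu x) \<bullet> Gh x)" by (rule inner_int[OF vq wh(1)])
  have k6: "integrable ?M (\<lambda>x. qh x \<bullet> Gh x)" by (rule inner_int[OF vqh wh(1)])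
  have orth: "(LINT x|?M. (A x *v Gu x - qh x) \<bullet> (Gu x - Gh x)) = 0"
  proof -
    have "(LINT x|?M. (A x *v Gu x - qh x) \<bullet> (Gu x - Gh x))
        = (LINT x|?M. (A x *v Gu x - qh x) \<bullet> Gu x - (A x *v Gu x - qh x) \<bullet> Gh x)"
      by (simp add: inner_diff_right)
    also have "\<dots> = (LINT x|?M. (A x *v Gu x - qh x) \<bullet> Gu x) - (LINT x|?M. (A x *v Gu x - qh x) \<bullet> Gh x)"
      using k1 k2 by (rule Bochner_Integration.integral_diff)
    also have "(LINT x|?M. (A x *v Gu x - qh x) \<bullet> Gu x) = (LINT x|?M. (A x *v Gu x) \<bullet> Gu x - qh x \<bullet> Gu x)"
      by (simp add: inner_diff_left)
    also have "\<dots> = 0" using k3 k4 Fu1 Fu2 by (simp add: integral_diff)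
    also have "(LINT x|?M. (A x *v Gu x - qh x) \<bullet> Gh x) = (LINT x|?M. (A x *v Gu x) \<bullet> Gh x - qh x \<bullet> Gh x)"
      by (simp add: inner_diff_left)
    also have "\<dots> = 0" using k5 k6 Fh1 Fh2 by (simp add: integral_diff)
    finally show ?thesis by simp
  qed
  have "W = (LINT x|?M. (1/4) * ((matrix_inv (A x) *v sg x) \<bullet> sg x) + (A x *v Gu x - qh x) \<bullet> (Gu x - Gh x))"
    unfolding W_def
  proof (rule int_eq_AE)
    show "integrable ?M (\<lambda>x. (matrix_inv (A x) *v w x) \<bullet> w x)" by (rule iW)
    show "integrable ?M (\<lambda>x. (1/4) * ((matrix_inv (A x) *v sg x) \<bullet> sg x) + (A x *v Gu x - qh x) \<bullet> (Gu x - Gh x))"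
      using iE inner_int[OF vd vsq_diff[OF wu(1) wh(1)]] by simp
    show "AE x in ?M. (matrix_inv (A x) *v w x) \<bullet> w x
        = (1/4) * ((matrix_inv (A x) *v sg x) \<bullet> sg x) + (A x *v Gu x - qh x) \<bullet> (Gu x - Gh x)"
      using gl
    proof eventually_elim
      case (elim x)
      then have l: "\<forall>y. matrix_inv (A x) *v (A x *v y) = y"
        and sB: "\<forall>x' y. (matrix_inv (A x) *v x') \<bullet> y = x' \<bullet> (matrix_inv (A x) *v y)"
        and sA: "\<forall>x' y. (A x *v x') \<bullet> y = x' \<bullet> (A x *v y)" by auto
      show ?case unfolding sg_def w_def by (rule pw_ident2[OF l sB sA])
    qed
  qed
  also have "\<dots> = (1/4) * E2 + (LINT x|?M. (A x *v Gu x - qh x) \<bullet> (Gu x - Gh x))"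
    unfolding E2_def using iE inner_int[OF vd vsq_diff[OF wu(1) wh(1)]] by (simp add: integral_add)
  finally have WE: "W = E2 / 4" using orth by simp

  have E2p: "0 \<le> E2" unfolding E2_def by (rule integral_nonneg_AE) (use Bpos in \<open>eventually_elim, blast\<close>)
  have Et2p: "0 \<le> Et2" unfolding Et2_def by (rule integral_nonneg_AE) (use Bpos in \<open>eventually_elim, blast\<close>)
  have Wp: "0 \<le> W" using E2p WE by simp
  have quad: "\<forall>t. 0 \<le> Et2 + 2 * t * X + t\<^sup>2 * W"
  proof
    fix t :: real
    have vz: "vsq_int ?M (\<lambda>x. st x + t *\<^sub>R w x)" by (rule vsq_add[OF vst vsq_scale[OF vw]])
    have "0 \<le> (LINT x|?M. (matrix_inv (A x) *v (st x + t *\<^sub>R w x)) \<bullet> (st x + t *\<^sub>R w x))"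
      by (rule integral_nonneg_AE) (use Bpos in \<open>eventually_elim, blast\<close>)
    also have "\<dots> = (LINT x|?M. (matrix_inv (A x) *v st x) \<bullet> st x + 2 * t * ((matrix_inv (A x) *v st x) \<bullet> w x)
        + t\<^sup>2 * ((matrix_inv (A x) *v w x) \<bullet> w x))"
    proof (rule int_eq_AE)
      show "integrable ?M (\<lambda>x. (matrix_inv (A x) *v (st x + t *\<^sub>R w x)) \<bullet> (st x + t *\<^sub>R w x))"
        by (rule inner_int[OF vB[OF vz] vz])
      show "integrable ?M (\<lambda>x. (matrix_inv (A x) *v st x) \<bullet> st x + 2 * t * ((matrix_inv (A x) *v st x) \<bullet> w x)
        + t\<^sup>2 * ((matrix_inv (A x) *v w x) \<bullet> w x))" using iEt iX iW by simp
      show "AE x in ?M. (matrix_inv (A x) *v (st x + t *\<^sub>R w x)) \<bullet> (st x + t *\<^sub>R w x)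
          = (matrix_inv (A x) *v st x) \<bullet> st x + 2 * t * ((matrix_inv (A x) *v st x) \<bullet> w x)
            + t\<^sup>2 * ((matrix_inv (A x) *v w x) \<bullet> w x)"
        using Bsym by eventually_elim (rule pw_ident3)
    qed
    also have "\<dots> = Et2 + 2 * t * X + t\<^sup>2 * W"
      unfolding Et2_def X_def W_def using iEt iX iW by (simp add: integral_add)
    finally show "0 \<le> Et2 + 2 * t * X + t\<^sup>2 * W" .
  qed
  have X2: "X\<^sup>2 \<le> Et2 * W" by (rule quad_cs[OF quad Wp])
  have Xb: "\<bar>X\<bar> \<le> (1/2) * sqrt E2 * sqrt Et2"
  proof -
    have "\<bar>X\<bar> = sqrt (X\<^sup>2)" by simp
    also have "\<dots> \<le> sqrt (Et2 * W)" using X2 by (rule real_sqrt_le_mono)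
    also have "\<dots> = sqrt Et2 * (sqrt E2 / 2)"
    proof -
      have s4: "sqrt (4::real) = 2" using real_sqrt_abs[of 2] by simp
      show ?thesis unfolding WE by (simp add: real_sqrt_mult real_sqrt_divide s4)
    qed
    finally show ?thesis by (simp add: mult.commute)
  qed
  have main: "\<bar>QW (\<iota> u) - QW uH - QW (\<iota> uh - uH) - Cbar \<Omega> A uh qh uth qth\<bar>
      \<le> (1/2) * ECRE \<Omega> A uh qh * ECRE \<Omega> A uth qth"
  proof -
    have "QW (\<iota> u) - QW uH - QW (\<iota> uh - uH) - Cbar \<Omega> A uh qh uth qth = X"
      using S1 DQ by simp
    then show ?thesis using Xb EE EEt by simp
  qed
  have h0: "0 \<le> (1/2) * ECRE \<Omega> A uh qh * ECRE \<Omega> A uth qth" using EE EEt E2p Et2p by simp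
  show ?thesis
    unfolding Let_def
  proof
    show "\<bar>QW (\<iota> u) - QW uH - QW (\<iota> uh - uH) - Cbar \<Omega> A uh qh uth qth\<bar>
      \<le> (1/2) * ECRE \<Omega> A uh qh * ECRE \<Omega> A uth qth" by (rule main)
    show "\<bar>QW (\<iota> u) - QW uH\<bar> \<le> max \<bar>QW (\<iota> uh - uH) + Cbar \<Omega> A uh qh uth qth + (1/2) * ECRE \<Omega> A uh qh * ECRE \<Omega> A uth qth\<bar>
        \<bar>QW (\<iota> uh - uH) + Cbar \<Omega> A uh qh uth qth - (1/2) * ECRE \<Omega> A uh qh * ECRE \<Omega> A uth qth\<bar>"
      using maxlem[OF main h0] .
  qed
qed

end
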